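(* Let $N=\{1,\dots,n\}$, let $\tilde Q\in\mathbb{R}^{n\times n}$ be symmetric positive definite, $\tilde d\in\mathbb{R}^n$, and $a,b\in\mathbb{R}^n$ with $b\le a$ componentwise. Let $A,B\subseteq N$ be disjoint, $I=N\setminus(A\cup B)$, and let $(x,s,t)$ be the KKT solution for $(A,B)$. Let $C=\{i: x_i<b_i \text{ or } s_i<0\}$, $D=\{i: x_i>a_i \text{ or } t_i>0\}$, and let $(y,u,v)$ be the KKT solution for $(C,D)$. Define $S=\{i\in A: s_i\ge0\}$, $T=\{i\in B: t_i\le 0\}$, $U=\{i\in I: x_i<b_i\}$, $V=\{i\in I: x_i>a_i\}$, $W=U\cup V$, $\overline W=N\setminus W$, $R=I\setminus W$, $K=\{i\in S\cup T\cup R: y_i<b_i\}$, $L=\{i\in S\cup T\cup R: y_i>a_i\}$ and $z=y-x$. Then for all real $c,d$, $$L_{c,d}(y,u,v)-L_{c,d}(x,s,t)=\tfrac12\big(z_W^{\top}\tilde Q_W z_W-z_{\overline W}^{\top}\tilde Q_{\overline W}z_{\overline W}\big)+\tfrac c2\sum_{i\in K}|y_i-b_i|^2+\tfrac d2\sum_{i\in L}|y_i-a_i|^2-\tfrac c2\sum_{i\in U}|x_i-b_i|^2-\tfrac d2\sum_{i\in V}|x_i-a_i|^2.$$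
   Context: For disjoint $A_1,A_2\subseteq N$, the KKT solution for $(A_1,A_2)$ is the unique triple $(x,s,t)\in(\mathbb{R}^n)^3$ with $x_{A_1}=b_{A_1}$, $x_{A_2}=a_{A_2}$, $s_i=0$ for $i\notin A_1$, $t_i=0$ for $i\notin A_2$, and $\tilde Qx+\tilde d+s+t=0$. The merit function is $L_{c,d}(x,s,t)=\tilde J(x)+\frac c2\|g(x)\|^2+\frac d2\|h(x)\|^2$ with $\tilde J(x)=\tfrac12x^{\top}\tilde Qx+\tilde d^{\top}x$, $g(x)=\max(b-x,0)$, $h(x)=\max(x-a,0)$ componentwise. For $M\subseteq N$, $z_M$ is the subvector of $z$ indexed by $M$ and $\tilde Q_M$ the principal submatrix of $\tilde Q$ indexed by $M$. *)

theory Defs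
  imports "HOL-Analysis.Analysis"
begin

text \<open>Index set N = UNIV of a finite type 'n; vectors are real^'n, matrices real^'n^'n.\<close>

definition sym_pos_def_mat :: "real^'n^'n \<Rightarrow> bool" where
  "sym_pos_def_mat Q \<longleftrightarrow> transpose Q = Q \<and> (\<forall>x. x \<noteq> 0 \<longrightarrow> x \<bullet> (Q *v x) > 0)"

definition kkt_solution ::
  "real^'n^'n \<Rightarrow> real^'n \<Rightarrow> real^'n \<Rightarrow> real^'n \<Rightarrow> 'n set \<Rightarrow> 'n set
     \<Rightarrow> real^'n \<Rightarrow> real^'n \<Rightarrow> real^'n \<Rightarrow> bool" where
  "kkt_solution Q dt a b A1 A2 x s t \<longleftrightarrow>
     (\<forall>i\<in>A1. x $ i = b $ i) \<and> (\<forall>i\<in>A2. x $ i = a $ i) \<and>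
     (\<forall>i. i \<notin> A1 \<longrightarrow> s $ i = 0) \<and> (\<forall>i. i \<notin> A2 \<longrightarrow> t $ i = 0) \<and>
     Q *v x + dt + s + t = 0"

definition Jt :: "real^'n^'n \<Rightarrow> real^'n \<Rightarrow> real^'n \<Rightarrow> real" where
  "Jt Q dt x = (1/2) * (x \<bullet> (Q *v x)) + dt \<bullet> x"

definition gfun :: "real^'n \<Rightarrow> real^'n \<Rightarrow> real^'n" where
  "gfun b x = (\<chi> i. max (b $ i - x $ i) 0)"

definition hfun :: "real^'n \<Rightarrow> real^'n \<Rightarrow> real^'n" where
  "hfun a x = (\<chi> i. max (x $ i - a $ i) 0)"

text \<open>Merit function L_{c,d}(x,s,t) (independent of s,t as in the paper).\<close>
definition merit ::
  "real^'n^'n \<Rightarrow> real^'n \<Rightarrow> real^'n \<Rightarrow> real^'n \<Rightarrow> real \<Rightarrow> real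
     \<Rightarrow> real^'n \<Rightarrow> real^'n \<Rightarrow> real^'n \<Rightarrow> real" where
  "merit Q dt a b c d x s t =
     Jt Q dt x + c/2 * (norm (gfun b x))\<^sup>2 + d/2 * (norm (hfun a x))\<^sup>2"

definition subquad :: "real^'n^'n \<Rightarrow> 'n set \<Rightarrow> real^'n \<Rightarrow> real" where
  "subquad Q M z = (\<Sum>i\<in>M. \<Sum>j\<in>M. z $ i * Q $ i $ j * z $ j)"

end

theory Submission
  imports Defs
begin
lemma sum_univ: "sum f (M::'n::finite set) = (\<Sum>i\<in>UNIV. if i \<in> M then f i else (0::real))"
  by (simp add: sum.If_cases)

lemma subquad_inner: "subquad Q M z = (\<chi> i. if i\<in>M then z$i else 0) \<bullet> (Q *v (\<chi> i. if i\<in>M then z$i else 0))"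
proof -
  have "subquad Q M z = (\<Sum>i\<in>UNIV. if i \<in> M then (\<Sum>j\<in>M. z $ i * Q $ i $ j * z $ j) else 0)"
    unfolding subquad_def by (rule sum_univ)
  also have "\<dots> = (\<Sum>i\<in>UNIV. \<Sum>j\<in>UNIV. (if i \<in> M then z $ i else 0) * (Q $ i $ j * (if j \<in> M then z $ j else 0)))"
    apply (rule sum.cong, simp)
    apply (subst sum_univ)
    apply (auto intro!: sum.cong)
    done
  finally show ?thesis unfolding inner_vec_def matrix_vector_mult_def
    by (simp add: sum_distrib_left)
qed

lemma sym_inner: assumes "transpose Q = Q" shows "u \<bullet> (Q *v w) = w \<bullet> ((Q::real^'n^'n) *v u)"
proof -
  have q: "Q$i$j = Q$j$i" for i j using arg_cong[OF assms, of "\<lambda>M. M$j$i"] by (simp add: transpose_def)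
  show ?thesis unfolding inner_vec_def matrix_vector_mult_def
    apply (simp add: sum_distrib_left)
    apply (subst sum.swap)
    apply (rule sum.cong, simp, rule sum.cong, simp)
    by (simp add: q)
qed

lemma normsq: "(norm (v::real^'n))\<^sup>2 = (\<Sum>i\<in>UNIV. (v$i)\<^sup>2)"
  by (simp only: power2_norm_eq_inner) (simp add: inner_vec_def power2_eq_square)
theorem mainTheorem3:
  fixes Q :: "real^'n^'n" and dt a b x s t y u v :: "real^'n"
    and A B :: "'n set" and c d :: real
  assumes "sym_pos_def_mat Q"
    and "\<forall>i. b $ i \<le> a $ i"
    and "A \<inter> B = {}"
    and "kkt_solution Q dt a b A B x s t"
    and "kkt_solution Q dt a b
           {i. x $ i < b $ i \<or> s $ i < 0} {i. x $ i > a $ i \<or> t $ i > 0} y u v"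
  shows
    "let I = UNIV - (A \<union> B);
         S = {i\<in>A. s $ i \<ge> 0};
         T = {i\<in>B. t $ i \<le> 0};
         U = {i\<in>I. x $ i < b $ i};
         V = {i\<in>I. x $ i > a $ i};
         W = U \<union> V;
         Wbar = UNIV - W;
         R = I - W;
         K = {i\<in>S \<union> T \<union> R. y $ i < b $ i};
         L = {i\<in>S \<union> T \<union> R. y $ i > a $ i};
         z = y - x
     in merit Q dt a b c d y u v - merit Q dt a b c d x s t =
        (1/2) * (subquad Q W z - subquad Q Wbar z)
        + c/2 * (\<Sum>i\<in>K. \<bar>y $ i - b $ i\<bar>\<^sup>2)
        + d/2 * (\<Sum>i\<in>L. \<bar>y $ i - a $ i\<bar>\<^sup>2)
        - c/2 * (\<Sum>i\<in>U. \<bar>x $ i - b $ i\<bar>\<^sup>2)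
        - d/2 * (\<Sum>i\<in>V. \<bar>x $ i - a $ i\<bar>\<^sup>2)"
proof -
  define I where "I = UNIV - (A \<union> B)"
  define S where "S = {i\<in>A. s $ i \<ge> 0}"
  define T where "T = {i\<in>B. t $ i \<le> 0}"
  define U where "U = {i\<in>I. x $ i < b $ i}"
  define V where "V = {i\<in>I. x $ i > a $ i}"
  define W where "W = U \<union> V"
  define Wbar where "Wbar = UNIV - W"
  define R where "R = I - W"
  define K where "K = {i\<in>S \<union> T \<union> R. y $ i < b $ i}"
  define L where "L = {i\<in>S \<union> T \<union> R. y $ i > a $ i}"
  define z where "z = y - x"
  have symQ: "transpose Q = Q" using assms(1) unfolding sym_pos_def_mat_def by blast
  have ba: "b$i \<le> a$i" for i using assms(2) by blast
  note k1 = assms(4)[unfolded kkt_solution_def]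
  note k2 = assms(5)[unfolded kkt_solution_def]
  have xA: "i \<in> A \<Longrightarrow> x$i = b$i" and xB: "i \<in> B \<Longrightarrow> x$i = a$i"
    and sA: "i \<notin> A \<Longrightarrow> s$i = 0" and tB: "i \<notin> B \<Longrightarrow> t$i = 0" for i
    using k1 by auto
  have eqx: "Q *v x + dt + s + t = 0" using k1 by blast
  have yC: "x $ i < b $ i \<or> s $ i < 0 \<Longrightarrow> y$i = b$i"
    and yD: "x $ i > a $ i \<or> t $ i > 0 \<Longrightarrow> y$i = a$i"
    and uC: "\<not>(x $ i < b $ i \<or> s $ i < 0) \<Longrightarrow> u$i = 0"
    and vD: "\<not>(x $ i > a $ i \<or> t $ i > 0) \<Longrightarrow> v$i = 0" for i
    using k2 by auto
  have eqy: "Q *v y + dt + u + v = 0" using k2 by blast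
  have AB: "i \<in> A \<Longrightarrow> i \<notin> B" for i using assms(3) by blast
  have gx: "(norm (gfun b x))\<^sup>2 = (\<Sum>i\<in>U. \<bar>x $ i - b $ i\<bar>\<^sup>2)"
    unfolding normsq gfun_def
    apply (subst sum_univ[where M=U])
    apply (rule sum.cong, simp)
    using xA xB ba unfolding U_def I_def
    by (auto simp: max_def power2_commute)
  have hx: "(norm (hfun a x))\<^sup>2 = (\<Sum>i\<in>V. \<bar>x $ i - a $ i\<bar>\<^sup>2)"
    unfolding normsq hfun_def
    apply (subst sum_univ[where M=V])
    apply (rule sum.cong, simp)
    using xA xB ba unfolding V_def I_def
    by (auto simp: max_def power2_commute)
  have gy: "(norm (gfun b y))\<^sup>2 = (\<Sum>i\<in>K. \<bar>y $ i - b $ i\<bar>\<^sup>2)"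
    unfolding normsq gfun_def
    apply (subst sum_univ[where M=K])
    apply (rule sum.cong, simp)
    subgoal for i
      using xA[of i] xB[of i] ba[of i] yC[of i] yD[of i] AB[of i]
      unfolding K_def S_def T_def R_def W_def U_def V_def I_def
      by (auto simp: max_def power2_commute)
    done
  have hy: "(norm (hfun a y))\<^sup>2 = (\<Sum>i\<in>L. \<bar>y $ i - a $ i\<bar>\<^sup>2)"
    unfolding normsq hfun_def
    apply (subst sum_univ[where M=L])
    apply (rule sum.cong, simp)
    subgoal for i
      using xA[of i] xB[of i] ba[of i] yC[of i] yD[of i] AB[of i]
      unfolding L_def S_def T_def R_def W_def U_def V_def I_def
      by (auto simp: max_def power2_commute)
    done
  define zW where "zW = (\<chi> i. if i\<in>W then z$i else 0)"
  define zB where "zB = (\<chi> i. if i\<in>Wbar then z$i else 0)"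
  have sqW: "subquad Q W z = zW \<bullet> (Q *v zW)" unfolding zW_def by (rule subquad_inner)
  have sqB: "subquad Q Wbar z = zB \<bullet> (Q *v zB)" unfolding zB_def by (rule subquad_inner)
  have yeq: "y = x + zW + zB" unfolding zW_def zB_def Wbar_def z_def by (auto simp: vec_eq_iff)
  have dtx: "dt = - (Q *v x) - s - t" using eqx unfolding vec_eq_iff by (simp add: algebra_simps) (metis add_eq_0_iff add.assoc add.commute)
  have dty: "dt = - (Q *v y) - u - v" using eqy unfolding vec_eq_iff by (simp add: algebra_simps) (metis add_eq_0_iff add.assoc add.commute)
  have p0: "(s + t) \<bullet> zW = 0"
    unfolding inner_vec_def zW_def
    by (rule sum.neutral) (auto simp: W_def U_def V_def I_def sA tB)
  have q0: "(u + v) \<bullet> zB = 0"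
    unfolding inner_vec_def zB_def
  proof (rule sum.neutral, intro ballI)
    fix i assume "i \<in> (UNIV::'n set)"
    show "(u + v) $ i \<bullet> (\<chi> i. if i \<in> Wbar then z $ i else 0) $ i = 0"
      using xA[of i] xB[of i] ba[of i] yC[of i] yD[of i] AB[of i] uC[of i] vD[of i] sA[of i] tB[of i]
      unfolding Wbar_def W_def U_def V_def I_def z_def
      by (cases "s$i < 0"; cases "t$i > 0"; cases "i \<in> A"; cases "i \<in> B"; auto)
  qed
  have dW: "dt \<bullet> zW = - ((Q *v x) \<bullet> zW)"
    using p0 unfolding dtx by (simp add: inner_diff_left inner_add_left algebra_simps)
  have dB: "dt \<bullet> zB = - ((Q *v y) \<bullet> zB)"
    using q0 unfolding dty by (simp add: inner_diff_left inner_add_left algebra_simps)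
  have s1: "x \<bullet> (Q *v zW) = zW \<bullet> (Q *v x)" using sym_inner[OF symQ] .
  have s2: "x \<bullet> (Q *v zB) = zB \<bullet> (Q *v x)" using sym_inner[OF symQ] .
  have s3: "zW \<bullet> (Q *v zB) = zB \<bullet> (Q *v zW)" using sym_inner[OF symQ] .
  have J: "Jt Q dt y - Jt Q dt x = (1/2) * (zW \<bullet> (Q *v zW) - zB \<bullet> (Q *v zB))"
  proof -
    have "Jt Q dt y - Jt Q dt x = (1/2) * (y \<bullet> (Q *v y)) - (1/2) * (x \<bullet> (Q *v x)) + dt \<bullet> zW + dt \<bullet> zB"
      unfolding Jt_def yeq by (simp add: inner_add_right algebra_simps)
    also have "\<dots> = (1/2) * (zW \<bullet> (Q *v zW) - zB \<bullet> (Q *v zB))"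
      unfolding dW dB unfolding yeq
      by (simp add: matrix_vector_right_distrib inner_add_left inner_add_right inner_commute s1 s2 s3 algebra_simps)
    finally show ?thesis .
  qed
  have main: "merit Q dt a b c d y u v - merit Q dt a b c d x s t =
        (1/2) * (subquad Q W z - subquad Q Wbar z)
        + c/2 * (\<Sum>i\<in>K. \<bar>y $ i - b $ i\<bar>\<^sup>2)
        + d/2 * (\<Sum>i\<in>L. \<bar>y $ i - a $ i\<bar>\<^sup>2)
        - c/2 * (\<Sum>i\<in>U. \<bar>x $ i - b $ i\<bar>\<^sup>2)
        - d/2 * (\<Sum>i\<in>V. \<bar>x $ i - a $ i\<bar>\<^sup>2)"
    unfolding merit_def gx hx gy hy sqW sqB using J by (simp add: algebra_simps)
  show ?thesis using main unfolding Let_def I_def S_def T_def U_def V_def W_def Wbar_def R_def K_def L_def z_def .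
qed
end
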